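(* Let $S$ be any scheduling rule, $V$ a finite set of variables, $G$ a p-goal and $G'$ a p-variant of $G$. Then: (a) if $G\xrightarrow{S,D}Q$ and $G'\xrightarrow{S,D}R$ are p-SLD derivations via $S$ with the same template $D$, then $R$ is a p-variant of $Q$; (b) if there is a p-SLD derivation $G'\xrightarrow{S,D}\cdot$ via $S$, then there is a p-SLD derivation $Dr=(G\xrightarrow{S,D}\cdot)$ via $S$ with $nvar(Dr)\cap V=\emptyset$.
   Context: A p-atom is a pair $a[p]$ of an atom $a$ and a rational priority $p$. A p-goal is a finite set of p-atoms with pairwise distinct priorities, regarded as a list ordered by increasing priority. Substitutions act on atoms and leave priorities unchanged. A clause is $h\leftarrow B$ with $h$ an atom and $B$ a p-goal. For p-goals with no common priority, $F+G=F\cup G$; $F|G$ denotes $F+G$ when all priorities of $F$ are smaller than those of $G$. A shifting $\underline{\pi}$ is a strictly increasing bijection $\mathbb{Q}\to\mathbb{Q}$ acting on priorities ($G\underline\pi$). $F$ is a p-variant of $G$ if $F=G\lambda\underline{\sigma}$ for a renaming $\lambda$ and a shifting $\underline{\sigma}$. Priority derivation step: for a p-goal $a|F$ ($a$ of least priority), clause $c=(h\leftarrow B)$, renaming $\xi$ with $var(a|F)\cap var(c\xi)=\emptyset$, idempotent relevant mgu $\theta$ of $a$ and $h\xi$, and shifting $\underline{\pi}$ with $F$, $B\xi\underline{\pi}$ sharing no priority: $a|F\xrightarrow{c\xi,\theta}(F+B\xi\underline{\pi})\theta$. A p-SLD derivation is a sequence of such steps with each renamed clause $c_j\xi_j$ variable-disjoint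 from the initial goal and all earlier renamed clauses; its template is the sequence of applied clauses and $nvar$ is the union of the sets $var(c_j\xi_j)$. Lowering: for $c=(h\leftarrow B)$, a step $a\lambda\underline{\sigma}|(K\lambda\underline{\sigma}+X)\xrightarrow{c}(X+K\lambda\underline{\sigma}+B\xi''\underline{\theta}'')\alpha''$ is a lowering by $X$ of $a|K\xrightarrow{c}(K+B\xi'\underline{\theta}')\alpha'$; a congruent lowering if some shifting $\underline{\rho}$ has $K\underline{\rho}=K\underline{\sigma}$ and $B\underline{\theta}'\underline{\rho}=B\underline{\theta}''$. Steps are (congruent) lowerings of each other if each is a (congruent) lowering of the other. A set $S$ of steps is deterministic if any two steps of $S$ that are lowerings of each other are congruent lowerings of each other; complete if (i) whenever some step $G\xrightarrow{c}\cdot$ exists, some step $G\xrightarrow{c}\cdot$ lies in $S$, and (ii) $S$ contains every step that is a congruent lowering of each other with a step of $S$. A scheduling rule is a complete deterministic set of steps; $G\xrightarrow{S,M}R$ denotes a p-SLD derivation with template $M$ all of whose steps lie in $S$. *)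

theory Defs
  imports Complex_Main
begin

datatype ('f) trm = Var nat | Fn 'f "'f trm list"

fun tsubst :: "(nat \<Rightarrow> 'f trm) \<Rightarrow> 'f trm \<Rightarrow> 'f trm" where
  "tsubst \<sigma> (Var x) = \<sigma> x"
| "tsubst \<sigma> (Fn f ts) = Fn f (map (tsubst \<sigma>) ts)"

fun tvars :: "'f trm \<Rightarrow> nat set" where
  "tvars (Var x) = {x}"
| "tvars (Fn f ts) = \<Union> (set (map tvars ts))"

datatype ('p,'f) atom = Atom 'p "'f trm list"

fun asubst :: "(nat \<Rightarrow> 'f trm) \<Rightarrow> ('p,'f) atom \<Rightarrow> ('p,'f) atom" where
  "asubst \<sigma> (Atom p ts) = Atom p (map (tsubst \<sigma>) ts)"

fun avars :: "('p,'f) atom \<Rightarrow> nat set" where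
  "avars (Atom p ts) = \<Union> (set (map tvars ts))"

type_synonym 'f subst = "nat \<Rightarrow> 'f trm"

definition scomp :: "'f subst \<Rightarrow> 'f subst \<Rightarrow> 'f subst" where
  "scomp \<sigma> \<tau> = (\<lambda>x. tsubst \<tau> (\<sigma> x))"

definition sdom :: "'f subst \<Rightarrow> nat set" where
  "sdom \<sigma> = {x. \<sigma> x \<noteq> Var x}"

definition srange_vars :: "'f subst \<Rightarrow> nat set" where
  "srange_vars \<sigma> = (\<Union>x\<in>sdom \<sigma>. tvars (\<sigma> x))"

definition renaming :: "'f subst \<Rightarrow> bool" where
  "renaming \<rho> \<longleftrightarrow> (\<exists>\<pi>. bij \<pi> \<and> finite {x. \<pi> x \<noteq> x} \<and> \<rho> = Var \<circ> \<pi>)"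

definition unifier :: "'f subst \<Rightarrow> ('p,'f) atom \<Rightarrow> ('p,'f) atom \<Rightarrow> bool" where
  "unifier \<theta> a b \<longleftrightarrow> asubst \<theta> a = asubst \<theta> b"

definition idem_rel_mgu :: "'f subst \<Rightarrow> ('p,'f) atom \<Rightarrow> ('p,'f) atom \<Rightarrow> bool" where
  "idem_rel_mgu \<theta> a b \<longleftrightarrow>
     unifier \<theta> a b
   \<and> (\<forall>\<tau>. unifier \<tau> a b \<longrightarrow> (\<exists>\<delta>. \<tau> = scomp \<theta> \<delta>))
   \<and> scomp \<theta> \<theta> = \<theta>
   \<and> sdom \<theta> \<union> srange_vars \<theta> \<subseteq> avars a \<union> avars b"

type_synonym ('p,'f) patom = "('p,'f) atom \<times> rat"
type_synonym ('p,'f) pgoal = "('p,'f) patom set"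

definition is_pgoal :: "('p,'f) pgoal \<Rightarrow> bool" where
  "is_pgoal G \<longleftrightarrow> finite G \<and> inj_on snd G"

definition prios :: "('p,'f) pgoal \<Rightarrow> rat set" where
  "prios G = snd ` G"

definition pvars :: "('p,'f) pgoal \<Rightarrow> nat set" where
  "pvars G = (\<Union>x\<in>G. avars (fst x))"

definition psubst :: "'f subst \<Rightarrow> ('p,'f) pgoal \<Rightarrow> ('p,'f) pgoal" where
  "psubst \<sigma> G = (\<lambda>(a,p). (asubst \<sigma> a, p)) ` G"

definition shifting :: "(rat \<Rightarrow> rat) \<Rightarrow> bool" where
  "shifting \<pi> \<longleftrightarrow> strict_mono \<pi> \<and> bij \<pi>"

definition pshift :: "(rat \<Rightarrow> rat) \<Rightarrow> ('p,'f) pgoal \<Rightarrow> ('p,'f) pgoal" where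
  "pshift \<pi> G = (\<lambda>(a,p). (a, \<pi> p)) ` G"

definition p_variant :: "('p,'f) pgoal \<Rightarrow> ('p,'f) pgoal \<Rightarrow> bool" where
  "p_variant F G \<longleftrightarrow> (\<exists>l \<sigma>. renaming l \<and> shifting \<sigma> \<and> F = pshift \<sigma> (psubst l G))"

definition least_patom :: "('p,'f) pgoal \<Rightarrow> ('p,'f) patom \<Rightarrow> bool" where
  "least_patom G x \<longleftrightarrow> x \<in> G \<and> (\<forall>y\<in>G. y \<noteq> x \<longrightarrow> snd x < snd y)"

definition sel :: "('p,'f) pgoal \<Rightarrow> ('p,'f) patom" where
  "sel G = (THE x. least_patom G x)"

type_synonym ('p,'f) clause = "('p,'f) atom \<times> ('p,'f) pgoal"

definition is_clause :: "('p,'f) clause \<Rightarrow> bool" where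
  "is_clause c \<longleftrightarrow> is_pgoal (snd c)"

definition cvars :: "('p,'f) clause \<Rightarrow> nat set" where
  "cvars c = avars (fst c) \<union> pvars (snd c)"

definition csubst :: "'f subst \<Rightarrow> ('p,'f) clause \<Rightarrow> ('p,'f) clause" where
  "csubst \<sigma> c = (asubst \<sigma> (fst c), psubst \<sigma> (snd c))"

text \<open>A step  a|F --(c xi, theta)--> (F + B xi pi) theta  is recorded by its source goal,
  the applied (unrenamed) clause c, the renaming xi, the mgu theta and the shifting pi.\<close>
record ('p,'f) step =
  src :: "('p,'f) pgoal"
  cls :: "('p,'f) clause"
  ren :: "'f subst"
  umgu :: "'f subst"
  shf :: "rat \<Rightarrow> rat"

definition rcl :: "('p,'f) step \<Rightarrow> ('p,'f) clause" where
  "rcl s = csubst (ren s) (cls s)"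

definition is_step :: "('p,'f) step \<Rightarrow> bool" where
  "is_step s \<longleftrightarrow>
     is_pgoal (src s) \<and> is_clause (cls s) \<and> renaming (ren s) \<and> shifting (shf s)
   \<and> (\<exists>x. least_patom (src s) x)
   \<and> pvars (src s) \<inter> cvars (rcl s) = {}
   \<and> idem_rel_mgu (umgu s) (fst (sel (src s))) (fst (rcl s))
   \<and> prios (src s - {sel (src s)}) \<inter> prios (pshift (shf s) (snd (rcl s))) = {}"

definition res :: "('p,'f) step \<Rightarrow> ('p,'f) pgoal" where
  "res s = psubst (umgu s) ((src s - {sel (src s)}) \<union> pshift (shf s) (snd (rcl s)))"

definition pat_map :: "'f subst \<Rightarrow> (rat \<Rightarrow> rat) \<Rightarrow> ('p,'f) patom \<Rightarrow> ('p,'f) patom" where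
  "pat_map l \<sigma> x = (asubst l (fst x), \<sigma> (snd x))"

text \<open>lower_data s2 s1 a K l sigma X: s1 is  a|K --c--> ..., and s2 is
  a l sigma | (K l sigma + X) --c--> ...\<close>
definition lower_data :: "('p,'f) step \<Rightarrow> ('p,'f) step \<Rightarrow> ('p,'f) patom \<Rightarrow> ('p,'f) pgoal
    \<Rightarrow> 'f subst \<Rightarrow> (rat \<Rightarrow> rat) \<Rightarrow> ('p,'f) pgoal \<Rightarrow> bool" where
  "lower_data s2 s1 a K l \<sigma> X \<longleftrightarrow>
     is_step s1 \<and> is_step s2 \<and> renaming l \<and> shifting \<sigma> \<and> cls s2 = cls s1
   \<and> src s1 = insert a K \<and> (\<forall>y\<in>K. snd a < snd y)
   \<and> src s2 = insert (pat_map l \<sigma> a) (pshift \<sigma> (psubst l K) \<union> X)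
   \<and> (\<forall>y\<in>pshift \<sigma> (psubst l K) \<union> X. snd (pat_map l \<sigma> a) < snd y)
   \<and> prios (pshift \<sigma> (psubst l K)) \<inter> prios X = {}"

definition lowering :: "('p,'f) step \<Rightarrow> ('p,'f) step \<Rightarrow> bool" where
  "lowering s2 s1 \<longleftrightarrow> (\<exists>a K l \<sigma> X. lower_data s2 s1 a K l \<sigma> X)"

definition cong_lowering :: "('p,'f) step \<Rightarrow> ('p,'f) step \<Rightarrow> bool" where
  "cong_lowering s2 s1 \<longleftrightarrow> (\<exists>a K l \<sigma> X \<rho>. lower_data s2 s1 a K l \<sigma> X \<and> shifting \<rho>
      \<and> pshift \<rho> K = pshift \<sigma> K
      \<and> pshift \<rho> (pshift (shf s1) (snd (cls s1))) = pshift (shf s2) (snd (cls s1)))"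

definition deterministic :: "('p,'f) step set \<Rightarrow> bool" where
  "deterministic S \<longleftrightarrow> (\<forall>s1\<in>S. \<forall>s2\<in>S. lowering s1 s2 \<and> lowering s2 s1
      \<longrightarrow> cong_lowering s1 s2 \<and> cong_lowering s2 s1)"

definition complete :: "('p,'f) step set \<Rightarrow> bool" where
  "complete S \<longleftrightarrow>
     (\<forall>G c. (\<exists>s. is_step s \<and> src s = G \<and> cls s = c) \<longrightarrow> (\<exists>s\<in>S. src s = G \<and> cls s = c))
   \<and> (\<forall>s1\<in>S. \<forall>s2. cong_lowering s1 s2 \<and> cong_lowering s2 s1 \<longrightarrow> s2 \<in> S)"

definition scheduling_rule :: "('p,'f) step set \<Rightarrow> bool" where
  "scheduling_rule S \<longleftrightarrow> (\<forall>s\<in>S. is_step s) \<and> complete S \<and> deterministic S"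

fun chain :: "('p,'f) pgoal \<Rightarrow> ('p,'f) step list \<Rightarrow> bool" where
  "chain G [] = True"
| "chain G (s # ss) = (is_step s \<and> src s = G \<and> chain (res s) ss)"

fun final :: "('p,'f) pgoal \<Rightarrow> ('p,'f) step list \<Rightarrow> ('p,'f) pgoal" where
  "final G [] = G"
| "final G (s # ss) = final (res s) ss"

definition psld :: "('p,'f) pgoal \<Rightarrow> ('p,'f) step list \<Rightarrow> bool" where
  "psld G ds \<longleftrightarrow> chain G ds \<and>
     (\<forall>j<length ds. cvars (rcl (ds ! j)) \<inter> (pvars G \<union> (\<Union>i<j. cvars (rcl (ds ! i)))) = {})"

definition template :: "('p,'f) step list \<Rightarrow> ('p,'f) clause list" where
  "template ds = map cls ds"

definition nvar :: "('p,'f) step list \<Rightarrow> nat set" where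
  "nvar ds = (\<Union>s\<in>set ds. cvars (rcl s))"

definition deriv_via :: "('p,'f) step set \<Rightarrow> ('p,'f) pgoal \<Rightarrow> ('p,'f) clause list \<Rightarrow> ('p,'f) pgoal \<Rightarrow> bool" where
  "deriv_via S G D R \<longleftrightarrow> (\<exists>ds. psld G ds \<and> set ds \<subseteq> S \<and> template ds = D \<and> final G ds = R)"

end

theory Submission
  imports Defs
begin

lemma tsubst_comp: "tsubst \<tau> (tsubst \<sigma> t) = tsubst (\<lambda>x. tsubst \<tau> (\<sigma> x)) t"
  by (induction t) auto
lemma tsubst_Var[simp]: "tsubst Var t = t"
  by (induction t) (auto simp: map_idI)
lemma tsubst_cong: "(\<And>x. x \<in> tvars t \<Longrightarrow> \<sigma> x = \<tau> x) \<Longrightarrow> tsubst \<sigma> t = tsubst \<tau> t"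
  by (induction t) auto
lemma tvars_tsubst: "tvars (tsubst \<sigma> t) = (\<Union>x\<in>tvars t. tvars (\<sigma> x))"
  by (induction t) auto
lemma finite_tvars[simp]: "finite (tvars t)"
  by (induction t) auto
lemma tsubst_fix: "tsubst \<sigma> t = t \<Longrightarrow> x \<in> tvars t \<Longrightarrow> \<sigma> x = Var x"
proof (induction t)
  case (Var y) then show ?case by simp
next
  case (Fn f ts)
  then obtain u where u: "u \<in> set ts" "x \<in> tvars u" by auto
  from Fn.prems(1) have "map (tsubst \<sigma>) ts = map id ts" by simp
  then have "tsubst \<sigma> u = u" using u(1) by (metis map_eq_conv id_apply)
  then show ?case using Fn.IH u by blast
qed

lemma asubst_comp: "asubst \<tau> (asubst \<sigma> a) = asubst (\<lambda>x. tsubst \<tau> (\<sigma> x)) a"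
  by (cases a) (auto simp: tsubst_comp)
lemma asubst_Var[simp]: "asubst Var a = a"
  by (cases a) (auto simp: map_idI)
lemma asubst_cong: "(\<And>x. x \<in> avars a \<Longrightarrow> \<sigma> x = \<tau> x) \<Longrightarrow> asubst \<sigma> a = asubst \<tau> a"
  by (cases a) (auto intro: tsubst_cong)
lemma avars_asubst: "avars (asubst \<sigma> a) = (\<Union>x\<in>avars a. tvars (\<sigma> x))"
  by (cases a) (auto simp: tvars_tsubst)
lemma finite_avars[simp]: "finite (avars a)"
  by (cases a) auto
lemma avars_ren: "avars (asubst (Var \<circ> f) a) = f ` avars a"
  by (auto simp: avars_asubst)

definition fperm :: "(nat \<Rightarrow> nat) \<Rightarrow> bool" where
  "fperm \<pi> \<longleftrightarrow> bij \<pi> \<and> finite {x. \<pi> x \<noteq> x}"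

lemma renaming_fperm: "renaming \<rho> \<longleftrightarrow> (\<exists>\<pi>. fperm \<pi> \<and> \<rho> = Var \<circ> \<pi>)"
  by (simp add: renaming_def fperm_def)

lemma fperm_id[simp]: "fperm id"
  by (simp add: fperm_def)

lemma fperm_comp: "fperm f \<Longrightarrow> fperm g \<Longrightarrow> fperm (f \<circ> g)"
  unfolding fperm_def
proof (intro conjI)
  assume a: "bij f \<and> finite {x. f x \<noteq> x}" "bij g \<and> finite {x. g x \<noteq> x}"
  then show "bij (f \<circ> g)" by (simp add: bij_comp)
  have "{x. (f \<circ> g) x \<noteq> x} \<subseteq> {x. f x \<noteq> x} \<union> {x. g x \<noteq> x}" by auto
  then show "finite {x. (f \<circ> g) x \<noteq> x}" using a finite_subset by blast
qed

lemma fperm_inv: "fperm f \<Longrightarrow> fperm (inv f)"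
  unfolding fperm_def
proof (intro conjI)
  assume a: "bij f \<and> finite {x. f x \<noteq> x}"
  then show "bij (inv f)" by (simp add: bij_imp_bij_inv)
  have "{x. inv f x \<noteq> x} = {x. f x \<noteq> x}"
    using a by (auto simp: bij_def) (metis a bij_inv_eq_iff)+
  then show "finite {x. inv f x \<noteq> x}" using a by simp
qed

lemma extend_perm:
  assumes "finite D" "inj_on f D"
  shows "\<exists>\<pi>. fperm \<pi> \<and> (\<forall>x\<in>D. \<pi> x = f x)"
proof -
  define B where "B = f ` D"
  have fB: "finite B" using assms B_def by simp
  have cB: "card B = card D" using assms B_def card_image by blast
  have "card (B - D) = card (D - B)"
    using fB assms(1) cB
    by (metis Int_commute card_Diff_subset_Int finite_Int)
  then obtain h where h: "bij_betw h (B - D) (D - B)"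
    using finite_same_card_bij fB assms(1) by (meson finite_Diff)
  have bf: "bij_betw f D B" using assms B_def by (simp add: bij_betw_def)
  have b1: "bij_betw (\<lambda>x. if x \<in> D then f x else h x) (D \<union> (B - D)) (B \<union> (D - B))"
    by (rule bij_betw_disjoint_Un[OF bf h]) auto
  have b2: "bij_betw (\<lambda>x. x) (- (D \<union> B)) (- (D \<union> B))" by (simp add: bij_betw_def)
  have b3: "bij_betw (\<lambda>x. if x \<in> D \<union> (B - D) then (if x \<in> D then f x else h x) else x)
      ((D \<union> (B - D)) \<union> (- (D \<union> B))) ((B \<union> (D - B)) \<union> (- (D \<union> B)))"
    by (rule bij_betw_disjoint_Un[OF b1 b2]) auto
  define \<pi> where "\<pi> = (\<lambda>x. if x \<in> D \<union> (B - D) then (if x \<in> D then f x else h x) else x)"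
  have "(D \<union> (B - D)) \<union> (- (D \<union> B)) = UNIV" "(B \<union> (D - B)) \<union> (- (D \<union> B)) = UNIV" by auto
  then have "bij \<pi>" using b3 \<pi>_def by simp
  moreover have "{x. \<pi> x \<noteq> x} \<subseteq> D \<union> B" using \<pi>_def by auto
  then have "finite {x. \<pi> x \<noteq> x}" using fB assms(1) finite_subset by blast
  ultimately show ?thesis using \<pi>_def by (auto simp: fperm_def)
qed

lemma strict_mono_fix:
  fixes f :: "rat \<Rightarrow> rat"
  assumes "strict_mono f" "finite P" "f ` P = P" "p \<in> P"
  shows "f p = p"
proof -
  have inj: "inj f" using assms(1) strict_mono_imp_inj_on by blast
  have "f ` {q\<in>P. q < p} = {q\<in>P. q < f p}"
  proof
    show "f ` {q\<in>P. q < p} \<subseteq> {q\<in>P. q < f p}"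
      using assms by (auto simp: strict_mono_less)
    show "{q\<in>P. q < f p} \<subseteq> f ` {q\<in>P. q < p}"
    proof
      fix q assume "q \<in> {q\<in>P. q < f p}"
      then obtain r where "r \<in> P" "q = f r" "f r < f p" using assms(3) by auto
      then show "q \<in> f ` {q\<in>P. q < p}" using assms(1) by (auto simp: strict_mono_less)
    qed
  qed
  then have c: "card {q\<in>P. q < p} = card {q\<in>P. q < f p}"
    by (metis card_image inj inj_on_subset subset_UNIV)
  have fp: "f p \<in> P" using assms by auto
  show ?thesis
  proof (rule ccontr)
    assume "f p \<noteq> p"
    then consider "f p < p" | "p < f p" by linarith
    then show False
    proof cases
      case 1
      have "insert (f p) {q\<in>P. q < f p} \<subseteq> {q\<in>P. q < p}" using 1 fp by auto
      moreover have "f p \<notin> {q\<in>P. q < f p}" by simp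
      ultimately have "card {q\<in>P. q < f p} + 1 \<le> card {q\<in>P. q < p}"
        using assms(2) by (metis (no_types, lifting) Suc_eq_plus1 card_insert_disjoint card_mono finite_subset mem_Collect_eq subsetI)
      then show False using c by simp
    next
      case 2
      have "insert p {q\<in>P. q < p} \<subseteq> {q\<in>P. q < f p}" using 2 assms(4) by auto
      moreover have "p \<notin> {q\<in>P. q < p}" by simp
      ultimately have "card {q\<in>P. q < p} + 1 \<le> card {q\<in>P. q < f p}"
        using assms(2) by (metis (no_types, lifting) Suc_eq_plus1 card_insert_disjoint card_mono finite_subset mem_Collect_eq subsetI)
      then show False using c by simp
    qed
  qed
qed


lemma bij_inv_f[simp]: "bij m \<Longrightarrow> inv m (m x) = x"
  by (simp add: bij_def inv_f_f)
lemma bij_f_inv[simp]: "bij m \<Longrightarrow> m (inv m x) = x"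
  by (simp add: bij_def surj_f_inv_f)

lemma tsubst_ren_inv1[simp]: "bij m \<Longrightarrow> tsubst (Var \<circ> inv m) (tsubst (Var \<circ> m) t) = t"
  by (simp add: tsubst_comp o_def)
lemma tsubst_ren_inv2[simp]: "bij m \<Longrightarrow> tsubst (Var \<circ> m) (tsubst (Var \<circ> inv m) t) = t"
  by (simp add: tsubst_comp o_def)
lemma asubst_ren_inv1[simp]: "bij m \<Longrightarrow> asubst (Var \<circ> inv m) (asubst (Var \<circ> m) t) = t"
  by (simp add: asubst_comp o_def)
lemma asubst_ren_inv2[simp]: "bij m \<Longrightarrow> asubst (Var \<circ> m) (asubst (Var \<circ> inv m) t) = t"
  by (simp add: asubst_comp o_def)

lemma mutual_inst:
  assumes "\<theta>1 = scomp \<theta>s \<delta>" "\<theta>s = scomp \<theta>1 \<delta>'" "finite W"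
  shows "\<exists>g. fperm g \<and> (\<forall>x\<in>W. \<theta>1 x = tsubst (Var \<circ> g) (\<theta>s x))"
proof -
  define R where "R = (\<Union>x\<in>W. tvars (\<theta>s x))"
  have fR: "finite R" using assms(3) R_def by simp
  have bk: "tsubst \<delta>' (\<delta> y) = Var y" if "y \<in> R" for y
  proof -
    from that obtain x where x: "x \<in> W" "y \<in> tvars (\<theta>s x)" using R_def by auto
    have e1: "\<theta>1 x = tsubst \<delta> (\<theta>s x)" using assms(1) by (metis scomp_def)
    have e2: "\<theta>s x = tsubst \<delta>' (\<theta>1 x)" using assms(2) by (metis scomp_def)
    have "\<theta>s x = tsubst \<delta>' (tsubst \<delta> (\<theta>s x))"
      using e1 e2 by metis
    also have "\<dots> = tsubst (\<lambda>y. tsubst \<delta>' (\<delta> y)) (\<theta>s x)" by (simp add: tsubst_comp)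
    finally show ?thesis using tsubst_fix x(2) by metis
  qed
  define f where "f = (\<lambda>y. case \<delta> y of Var z \<Rightarrow> z | _ \<Rightarrow> y)"
  have df: "\<delta> y = Var (f y)" if "y \<in> R" for y
  proof (cases "\<delta> y")
    case (Var z) then show ?thesis by (simp add: f_def)
  next
    case (Fn g ts) then show ?thesis using bk[OF that] by simp
  qed
  have "inj_on f R"
  proof
    fix y1 y2 assume "y1 \<in> R" "y2 \<in> R" "f y1 = f y2"
    then have "\<delta> y1 = \<delta> y2" using df by simp
    then show "y1 = y2" using bk \<open>y1 \<in> R\<close> \<open>y2 \<in> R\<close> by (metis trm.inject(1))
  qed
  then obtain g where g: "fperm g" "\<forall>x\<in>R. g x = f x" using extend_perm fR by blast
  have "\<theta>1 x = tsubst (Var \<circ> g) (\<theta>s x)" if "x \<in> W" for x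
  proof -
    have "\<theta>1 x = tsubst \<delta> (\<theta>s x)" using assms(1) by (metis scomp_def)
    also have "\<dots> = tsubst (Var \<circ> g) (\<theta>s x)"
      by (rule tsubst_cong) (use that g df R_def in auto)
    finally show ?thesis .
  qed
  then show ?thesis using g by blast
qed

lemma mgu_transport:
  assumes "bij m" "idem_rel_mgu \<theta> (asubst (Var \<circ> m) a) (asubst (Var \<circ> m) b)"
  shows "idem_rel_mgu (\<lambda>x. tsubst (Var \<circ> inv m) (\<theta> (m x))) a b"
proof -
  define \<theta>t where "\<theta>t = (\<lambda>x. tsubst (Var \<circ> inv m) (\<theta> (m x)))"
  have u: "asubst \<theta> (asubst (Var \<circ> m) a) = asubst \<theta> (asubst (Var \<circ> m) b)"
    and mg: "\<forall>\<tau>. unifier \<tau> (asubst (Var \<circ> m) a) (asubst (Var \<circ> m) b) \<longrightarrow> (\<exists>\<delta>. \<tau> = scomp \<theta> \<delta>)"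
    and idm: "scomp \<theta> \<theta> = \<theta>"
    and rel: "sdom \<theta> \<union> srange_vars \<theta> \<subseteq> avars (asubst (Var \<circ> m) a) \<union> avars (asubst (Var \<circ> m) b)"
    using assms(2) by (auto simp: idem_rel_mgu_def unifier_def)
  have ta: "asubst \<theta>t c = asubst (Var \<circ> inv m) (asubst \<theta> (asubst (Var \<circ> m) c))" for c
    by (simp add: \<theta>t_def asubst_comp)
  have U: "unifier \<theta>t a b" using u by (simp add: unifier_def ta)
  have M: "\<exists>\<delta>. \<tau> = scomp \<theta>t \<delta>" if "unifier \<tau> a b" for \<tau>
  proof -
    define \<tau>' where "\<tau>' = (\<lambda>x. \<tau> (inv m x))"
    have tr: "asubst \<tau>' (asubst (Var \<circ> m) c) = asubst \<tau> c" for c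
      using assms(1) by (simp add: asubst_comp \<tau>'_def o_def)
    have "unifier \<tau>' (asubst (Var \<circ> m) a) (asubst (Var \<circ> m) b)"
      unfolding unifier_def tr using that by (simp add: unifier_def)
    then obtain \<delta> where d: "\<tau>' = scomp \<theta> \<delta>" using mg by blast
    have "\<tau> = scomp \<theta>t (\<lambda>z. \<delta> (m z))"
    proof
      fix x
      have "\<tau> x = \<tau>' (m x)" using assms(1) by (simp add: \<tau>'_def)
      also have "\<dots> = tsubst \<delta> (\<theta> (m x))" using d by (simp add: scomp_def)
      also have "\<dots> = scomp \<theta>t (\<lambda>z. \<delta> (m z)) x"
        using assms(1) by (simp add: scomp_def \<theta>t_def tsubst_comp o_def)
      finally show "\<tau> x = scomp \<theta>t (\<lambda>z. \<delta> (m z)) x" .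
    qed
    then show ?thesis by blast
  qed
  have idp: "tsubst \<theta> (\<theta> z) = \<theta> z" for z
    using idm by (metis scomp_def)
  have I: "scomp \<theta>t \<theta>t = \<theta>t"
  proof
    fix x
    have "scomp \<theta>t \<theta>t x = tsubst (\<lambda>y. \<theta>t (inv m y)) (\<theta> (m x))"
      by (simp add: scomp_def \<theta>t_def tsubst_comp o_def)
    also have "\<dots> = tsubst (\<lambda>y. tsubst (Var \<circ> inv m) (\<theta> y)) (\<theta> (m x))"
      using assms(1) by (simp add: \<theta>t_def)
    also have "\<dots> = tsubst (Var \<circ> inv m) (tsubst \<theta> (\<theta> (m x)))" by (simp add: tsubst_comp)
    also have "\<dots> = \<theta>t x" by (simp add: idp \<theta>t_def)
    finally show "scomp \<theta>t \<theta>t x = \<theta>t x" .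
  qed
  have dom: "x \<in> sdom \<theta>t \<longleftrightarrow> m x \<in> sdom \<theta>" for x
  proof -
    have "\<theta>t x = Var x \<longleftrightarrow> \<theta> (m x) = Var (m x)"
    proof
      assume "\<theta>t x = Var x"
      then have "tsubst (Var \<circ> m) (\<theta>t x) = Var (m x)" by simp
      then show "\<theta> (m x) = Var (m x)" using assms(1) by (simp add: \<theta>t_def)
    qed (use assms(1) in \<open>simp add: \<theta>t_def\<close>)
    then show ?thesis by (simp add: sdom_def)
  qed
  have R: "sdom \<theta>t \<union> srange_vars \<theta>t \<subseteq> avars a \<union> avars b"
  proof
    fix y assume "y \<in> sdom \<theta>t \<union> srange_vars \<theta>t"
    then consider "y \<in> sdom \<theta>t" | x where "x \<in> sdom \<theta>t" "y \<in> tvars (\<theta>t x)"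
      by (auto simp: srange_vars_def)
    then show "y \<in> avars a \<union> avars b"
    proof cases
      case 1
      then have "m y \<in> avars (asubst (Var \<circ> m) a) \<union> avars (asubst (Var \<circ> m) b)"
        using dom rel by blast
      then show ?thesis using assms(1) by (auto simp: avars_ren bij_def inj_eq)
    next
      case 2
      have "y \<in> tvars (tsubst (Var \<circ> inv m) (\<theta> (m x)))" using 2 by (simp add: \<theta>t_def)
      then obtain z where z: "z \<in> tvars (\<theta> (m x))" "y = inv m z" by (auto simp: tvars_tsubst)
      have "z \<in> srange_vars \<theta>" using z(1) dom 2(1) by (auto simp: srange_vars_def)
      then have "z \<in> m ` (avars a \<union> avars b)" using rel by (auto simp: avars_ren)
      then show ?thesis using z(2) assms(1) by auto
    qed
  qed
  show ?thesis using U M I R by (simp add: idem_rel_mgu_def \<theta>t_def)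
qed


lemma shifting_id[simp]: "shifting id" by (simp add: shifting_def strict_mono_def)
lemma shifting_comp: "shifting f \<Longrightarrow> shifting g \<Longrightarrow> shifting (f \<circ> g)"
  by (auto simp: shifting_def bij_comp strict_mono_def)
lemma shifting_inv: "shifting f \<Longrightarrow> shifting (inv f)"
  unfolding shifting_def
proof (intro conjI)
  assume a: "strict_mono f \<and> bij f"
  then show "bij (inv f)" by (simp add: bij_imp_bij_inv)
  show "strict_mono (inv f)"
  proof (rule strict_monoI)
    fix x y :: rat assume "x < y"
    show "inv f x < inv f y"
    proof (rule ccontr)
      assume "\<not> inv f x < inv f y"
      then have "inv f y \<le> inv f x" by simp
      then have "f (inv f y) \<le> f (inv f x)" using a by (metis strict_mono_less_eq)
      then show False using a \<open>x < y\<close> by (simp add: bij_f_inv)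
    qed
  qed
qed

lemma pv_image: "pshift \<sigma> (psubst l G) = pat_map l \<sigma> ` G"
  by (force simp: pshift_def psubst_def pat_map_def image_iff)
lemma psubst_image: "psubst l G = pat_map l id ` G"
  by (force simp: psubst_def pat_map_def image_iff)
lemma pshift_image: "pshift \<sigma> G = pat_map Var \<sigma> ` G"
  by (force simp: pshift_def pat_map_def image_iff)

lemma psubst_comp: "psubst \<tau> (psubst \<sigma> G) = psubst (\<lambda>x. tsubst \<tau> (\<sigma> x)) G"
  by (simp add: psubst_image image_image pat_map_def asubst_comp)
lemma pshift_comp: "pshift f (pshift g G) = pshift (f \<circ> g) G"
  by (simp add: pshift_image image_image pat_map_def)
lemma psubst_pshift: "psubst \<theta> (pshift f G) = pshift f (psubst \<theta> G)"
  by (simp add: pshift_image psubst_image image_image pat_map_def)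
lemma psubst_Un: "psubst \<theta> (A \<union> B) = psubst \<theta> A \<union> psubst \<theta> B"
  by (simp add: psubst_def image_Un)
lemma pshift_Un: "pshift \<theta> (A \<union> B) = pshift \<theta> A \<union> pshift \<theta> B"
  by (simp add: pshift_def image_Un)
lemma psubst_Var[simp]: "psubst Var G = G"
  by (simp add: psubst_image pat_map_def)
lemma pshift_id[simp]: "pshift id G = G"
  by (simp add: pshift_image pat_map_def)
lemma pat_map_id[simp]: "pat_map Var id x = x"
  by (simp add: pat_map_def)
lemma pvars_Un: "pvars (A \<union> B) = pvars A \<union> pvars B"
  by (auto simp: pvars_def)
lemma prios_Un: "prios (A \<union> B) = prios A \<union> prios B"
  by (auto simp: prios_def)

lemma psubst_cong: "(\<And>x. x \<in> pvars G \<Longrightarrow> \<sigma> x = \<tau> x) \<Longrightarrow> psubst \<sigma> G = psubst \<tau> G"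
  unfolding psubst_image pat_map_def pvars_def
  by (rule image_cong) (auto intro!: asubst_cong)
lemma pshift_cong: "(\<And>p. p \<in> prios G \<Longrightarrow> f p = g p) \<Longrightarrow> pshift f G = pshift g G"
  unfolding pshift_image pat_map_def prios_def
  by (rule image_cong) auto
lemma pvars_psubst_ren: "pvars (psubst (Var \<circ> f) G) = f ` pvars G"
  by (auto simp: pvars_def psubst_image pat_map_def avars_ren)
lemma pvars_pshift[simp]: "pvars (pshift f G) = pvars G"
  by (auto simp: pvars_def pshift_image pat_map_def)
lemma prios_psubst[simp]: "prios (psubst l G) = prios G"
  by (simp add: prios_def psubst_image pat_map_def image_image)
lemma prios_pshift: "prios (pshift f G) = f ` prios G"
  by (simp add: prios_def pshift_image pat_map_def image_image)
lemma finite_pvars: "finite G \<Longrightarrow> finite (pvars G)"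
  by (simp add: pvars_def)
lemma finite_prios: "finite G \<Longrightarrow> finite (prios G)"
  by (simp add: prios_def)

lemma is_pgoal_psubst: "is_pgoal G \<Longrightarrow> is_pgoal (psubst l G)"
  by (auto simp: is_pgoal_def psubst_image pat_map_def inj_on_def)
lemma is_pgoal_pshift: "is_pgoal G \<Longrightarrow> inj f \<Longrightarrow> is_pgoal (pshift f G)"
  by (auto simp: is_pgoal_def pshift_image pat_map_def inj_on_def)

lemma pat_map_inv[simp]: "bij m \<Longrightarrow> bij \<sigma> \<Longrightarrow> pat_map (Var \<circ> inv m) (inv \<sigma>) (pat_map (Var \<circ> m) \<sigma> x) = x"
  by (simp add: pat_map_def)
lemma pat_map_inj: "bij m \<Longrightarrow> inj \<sigma> \<Longrightarrow> inj (pat_map (Var \<circ> m) \<sigma>)"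
  unfolding inj_def pat_map_def
  by (metis asubst_ren_inv1 prod.expand prod.inject)

lemma pv_inv: "bij m \<Longrightarrow> bij \<sigma> \<Longrightarrow>
   pshift (inv \<sigma>) (psubst (Var \<circ> inv m) (pshift \<sigma> (psubst (Var \<circ> m) G))) = G"
  by (simp add: pv_image image_image)

lemma pv_comp: "pshift \<sigma> (psubst (Var \<circ> m) (pshift \<rho> (psubst (Var \<circ> g) X)))
    = pshift (\<sigma> \<circ> \<rho>) (psubst (Var \<circ> (m \<circ> g)) X)"
  by (simp add: pv_image image_image pat_map_def asubst_comp o_def)

lemma least_unique: "least_patom G x \<Longrightarrow> least_patom G y \<Longrightarrow> x = y"
  unfolding least_patom_def by force
lemma sel_eq: "least_patom G x \<Longrightarrow> sel G = x"
  unfolding sel_def using least_unique by blast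
lemma least_map: "least_patom G x \<Longrightarrow> strict_mono \<sigma> \<Longrightarrow>
    least_patom (pat_map l \<sigma> ` G) (pat_map l \<sigma> x)"
  unfolding least_patom_def pat_map_def by (auto simp: strict_mono_less)

lemma csubst_comp: "csubst \<tau> (csubst \<sigma> c) = csubst (\<lambda>x. tsubst \<tau> (\<sigma> x)) c"
  by (simp add: csubst_def asubst_comp psubst_comp)
lemma cvars_csubst_ren: "cvars (csubst (Var \<circ> f) c) = f ` cvars c"
  by (auto simp: cvars_def csubst_def avars_ren pvars_psubst_ren)
lemma csubst_cong: "(\<And>x. x \<in> cvars c \<Longrightarrow> \<sigma> x = \<tau> x) \<Longrightarrow> csubst \<sigma> c = csubst \<tau> c"
  unfolding csubst_def cvars_def
  by (metis Un_iff asubst_cong psubst_cong)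
lemma finite_cvars: "is_clause c \<Longrightarrow> finite (cvars c)"
  by (auto simp: cvars_def is_clause_def is_pgoal_def finite_pvars)


lemma csubst_Var[simp]: "csubst Var c = c" by (simp add: csubst_def)

lemma is_stepD:
  assumes "is_step s"
  shows "is_pgoal (src s)" "is_clause (cls s)" "renaming (ren s)" "shifting (shf s)"
    "\<exists>x. least_patom (src s) x" "pvars (src s) \<inter> cvars (rcl s) = {}"
    "idem_rel_mgu (umgu s) (fst (sel (src s))) (fst (rcl s))"
    "prios (src s - {sel (src s)}) \<inter> prios (pshift (shf s) (snd (rcl s))) = {}"
  using assms by (auto simp: is_step_def)

lemma sel_least: "is_step s \<Longrightarrow> least_patom (src s) (sel (src s))"
  using is_stepD(5) sel_eq by metis

lemma transport:
  fixes s' :: "('p,'f) step"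
  assumes st: "is_step s'" and G': "src s' = pshift \<sigma> (psubst (Var \<circ> l) G)"
    and fl: "fperm l" and sh: "shifting \<sigma>" and F: "finite F"
  shows "\<exists>t m. is_step t \<and> src t = G \<and> cls t = cls s' \<and> cvars (rcl t) \<inter> F = {} \<and> fperm m
     \<and> res s' = pshift \<sigma> (psubst (Var \<circ> m) (res t)) \<and> cong_lowering s' t \<and> cong_lowering t s'"
proof -
  note sD = is_stepD[OF st]
  obtain xf where xf: "fperm xf" "ren s' = Var \<circ> xf" using sD(3) renaming_fperm by blast
  have bs: "bij \<sigma>" "strict_mono \<sigma>" using sh by (auto simp: shifting_def)
  have bl: "bij l" using fl by (simp add: fperm_def)
  define c where "c = cls s'"
  define W' where "W' = cvars (rcl s')"
  have rcs: "rcl s' = csubst (Var \<circ> xf) c" by (simp add: rcl_def c_def xf)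
  have fW: "finite W'" unfolding W'_def rcs cvars_csubst_ren using finite_cvars[OF sD(2)] by (simp add: c_def)
  have Gi: "G = pshift (inv \<sigma>) (psubst (Var \<circ> inv l) (src s'))"
    unfolding G' using pv_inv[OF bl bs(1)] by metis
  have pgG: "is_pgoal G"
    using Gi sD(1) is_pgoal_psubst is_pgoal_pshift bs(1) bij_imp_bij_inv bij_is_inj by metis
  define A where "A = pvars G"
  have fA: "finite A" using pgG A_def finite_pvars is_pgoal_def by blast
  have "finite (F \<union> A)" using F fA by simp
  then obtain N where N: "F \<union> A \<subseteq> {..<N}" using finite_nat_set_iff_bounded by (meson lessThan_iff subsetI)
  define Z where "Z = {N..<N + card W'}"
  have cZ: "card Z = card W'" "finite Z" by (auto simp: Z_def)
  obtain h where h: "bij_betw h Z W'" using finite_same_card_bij cZ fW by metis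
  have AZ: "A \<inter> Z = {}" "F \<inter> Z = {}" using N by (auto simp: Z_def)
  define fd where "fd = (\<lambda>x. if x \<in> A then l x else h x)"
  have pv': "pvars (src s') = l ` A" using G' A_def pvars_psubst_ren by simp
  have "inj_on fd (A \<union> Z)"
    unfolding inj_on_Un
  proof (intro conjI)
    show "inj_on fd A" using bl unfolding fd_def inj_on_def by (auto simp: bij_def inj_eq)
    show "inj_on fd Z" using h AZ unfolding fd_def inj_on_def bij_betw_def by auto
    have "fd ` (A - Z) \<subseteq> pvars (src s')" using pv' fd_def by auto
    moreover have "fd ` (Z - A) \<subseteq> W'" using h fd_def AZ by (auto simp: bij_betw_def)
    ultimately show "fd ` (A - Z) \<inter> fd ` (Z - A) = {}" using sD(6) W'_def by blast
  qed
  then obtain m where m: "fperm m" "\<forall>x\<in>A \<union> Z. m x = fd x"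
    using extend_perm fA cZ(2) by (meson finite_UnI)
  have bm: "bij m" using m(1) fperm_def by blast
  have mA: "\<forall>x\<in>A. m x = l x" using m(2) fd_def by auto
  have mZ: "m ` Z = W'"
  proof -
    have "m ` Z = h ` Z" using m(2) fd_def AZ by (auto intro!: image_cong)
    then show ?thesis using h bij_betw_def by metis
  qed
  have e1: "psubst (Var \<circ> m) G = psubst (Var \<circ> l) G"
    by (rule psubst_cong) (use mA A_def in auto)
  define PM :: "('p,'f) patom \<Rightarrow> ('p,'f) patom" where "PM = pat_map (Var \<circ> m) \<sigma>"
  have injPM: "inj PM" using pat_map_inj bm bs(1) bij_is_inj PM_def by metis
  have G'm: "src s' = PM ` G" using G' e1 pv_image PM_def by metis
  define \<theta>' where "\<theta>' = umgu s'"
  define \<theta>t where "\<theta>t = (\<lambda>x. tsubst (Var \<circ> inv m) (\<theta>' (m x)))"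
  define \<sigma>t where "\<sigma>t = inv \<sigma> \<circ> shf s'"
  define t :: "('p,'f) step" where "t = \<lparr>src = G, cls = c, ren = Var \<circ> (inv m \<circ> xf), umgu = \<theta>t, shf = \<sigma>t\<rparr>"
  have rct: "rcl t = csubst (Var \<circ> inv m) (rcl s')"
    by (simp add: rcl_def t_def xf c_def csubst_comp o_def)
  have rcs': "rcl s' = csubst (Var \<circ> m) (rcl t)"
    using bm by (simp add: rct csubst_comp o_def)
  have cvt: "cvars (rcl t) = Z"
  proof -
    have "cvars (rcl t) = inv m ` W'" using rct W'_def cvars_csubst_ren by metis
    also have "\<dots> = Z" using mZ bm by (auto simp: image_image)
    finally show ?thesis .
  qed
  obtain x' where x': "least_patom (src s') x'" using sD(5) by blast
  have Gi2: "G = pat_map (Var \<circ> inv m) (inv \<sigma>) ` src s'"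
    using G'm bm bs(1) PM_def by (simp add: image_image)
  have smi: "strict_mono (inv \<sigma>)" using shifting_inv sh shifting_def by blast
  have "least_patom G (pat_map (Var \<circ> inv m) (inv \<sigma>) x')"
    using least_map[OF x' smi] Gi2 by simp
  then have x0: "least_patom G (sel G)" using sel_eq by metis
  define x0 where "x0 = sel G"
  have sel': "sel (src s') = PM x0"
    using least_map[OF x0 bs(2)] G'm PM_def sel_eq x0_def by metis
  have mgu_t: "idem_rel_mgu \<theta>t (fst x0) (fst (rcl t))"
  proof -
    have "idem_rel_mgu \<theta>' (asubst (Var \<circ> m) (fst x0)) (asubst (Var \<circ> m) (fst (rcl t)))"
      using sD(7) sel' rcs' by (simp add: \<theta>'_def PM_def pat_map_def csubst_def)
    then show ?thesis using mgu_transport bm \<theta>t_def by blast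
  qed
  have minus: "src s' - {sel (src s')} = pshift \<sigma> (psubst (Var \<circ> m) (G - {x0}))"
    using sel' G'm injPM by (simp add: pv_image PM_def image_set_diff)
  have Bs: "snd (rcl s') = psubst (Var \<circ> m) (snd (rcl t))"
    using rcs' by (simp add: csubst_def)
  have ssi: "\<sigma> \<circ> \<sigma>t = shf s'" using bs(1) by (auto simp: \<sigma>t_def)
  have pr_t: "prios (G - {x0}) \<inter> prios (pshift \<sigma>t (snd (rcl t))) = {}"
  proof -
    have "\<sigma> ` prios (G - {x0}) \<inter> shf s' ` prios (snd (rcl t)) = {}"
      using sD(8) minus Bs by (simp add: prios_pshift)
    then show ?thesis using bs(1) by (auto simp: prios_pshift \<sigma>t_def)
  qed
  have sht: "shifting \<sigma>t" using shifting_comp shifting_inv sh sD(4) \<sigma>t_def by blast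
  have tf: "src t = G" "cls t = c" "ren t = Var \<circ> (inv m \<circ> xf)" "umgu t = \<theta>t" "shf t = \<sigma>t"
    by (simp_all add: t_def)
  have rnt: "renaming (ren t)"
    using fperm_comp fperm_inv xf(1) m(1) tf(3) renaming_fperm by blast
  have dvt: "pvars G \<inter> cvars (rcl t) = {}" using cvt AZ A_def by auto
  have ex0: "\<exists>x. least_patom G x" using x0 by blast
  have ist: "is_step t"
    unfolding is_step_def tf(1,2,4,5)
    using pgG sD(2) c_def sht ex0 mgu_t pr_t rnt dvt x0_def by auto
  define Ut where "Ut = (G - {x0}) \<union> pshift \<sigma>t (snd (rcl t))"
  have rest: "res t = psubst \<theta>t Ut" by (simp add: res_def Ut_def t_def x0_def)
  have "pshift (shf s') (snd (rcl s')) = pshift \<sigma> (psubst (Var \<circ> m) (pshift \<sigma>t (snd (rcl t))))"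
    using Bs ssi by (simp add: psubst_pshift pshift_comp)
  then have "res s' = psubst \<theta>' (pshift \<sigma> (psubst (Var \<circ> m) Ut))"
    using minus by (simp add: res_def \<theta>'_def Ut_def psubst_Un pshift_Un)
  also have "\<dots> = pshift \<sigma> (psubst (Var \<circ> m) (res t))"
    using bm by (simp add: rest psubst_pshift psubst_comp \<theta>t_def)
  finally have res_eq: "res s' = pshift \<sigma> (psubst (Var \<circ> m) (res t))" .
  define K where "K = G - {x0}"
  have x0G: "x0 \<in> G" and x0K: "\<forall>y\<in>K. snd x0 < snd y"
    using x0 x0_def K_def by (auto simp: least_patom_def)
  have GK: "G = insert x0 K" using x0G K_def by auto
  have G'K: "src s' = insert (PM x0) (PM ` K)" using G'm GK by simp
  have PMK: "pshift \<sigma> (psubst (Var \<circ> m) K) = PM ` K" using pv_image PM_def by metis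
  have PMlt: "\<forall>y\<in>PM ` K. snd (PM x0) < snd y"
    using x0K bs(2) by (auto simp: PM_def pat_map_def strict_mono_less)
  have PMinv: "pshift (inv \<sigma>) (psubst (Var \<circ> inv m) (PM ` K)) = K"
    using bm bs(1) by (simp add: pv_image image_image PM_def)
  have PMx0: "pat_map (Var \<circ> inv m) (inv \<sigma>) (PM x0) = x0"
    using bm bs(1) by (simp add: PM_def)
  have PMnot: "PM x0 \<notin> PM ` K" using PMlt by auto
  have l1: "cong_lowering s' t"
    unfolding cong_lowering_def
  proof (intro exI conjI)
    show "lower_data s' t x0 K (Var \<circ> m) \<sigma> {}"
      unfolding lower_data_def
      using ist st m(1) sh tf(1,2) c_def GK x0K G'K PMK PMlt
      by (auto simp: renaming_fperm PM_def prios_def)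
    show "pshift \<sigma> (pshift (shf t) (snd (cls t))) = pshift (shf s') (snd (cls t))"
      using ssi by (simp add: pshift_comp tf)
  qed (use sh in auto)
  have l2: "cong_lowering t s'"
    unfolding cong_lowering_def
  proof (intro exI conjI)
    have K': "src s' - {PM x0} = PM ` K" using G'K PMnot by auto
    show "lower_data t s' (PM x0) (PM ` K) (Var \<circ> inv m) (inv \<sigma>) {}"
      unfolding lower_data_def
      using ist st m(1) fperm_inv[OF m(1)] shifting_inv[OF sh] tf(1,2) c_def GK x0K G'K PMlt PMinv PMx0
      by (auto simp: renaming_fperm prios_def)
    show "pshift (inv \<sigma>) (pshift (shf s') (snd (cls s'))) = pshift (shf t) (snd (cls s'))"
      by (simp add: pshift_comp tf \<sigma>t_def)
  qed (use sh shifting_inv in auto)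
  show ?thesis
    using ist l1 l2 res_eq m(1) cvt AZ tf(1,2) c_def by blast
qed


lemma min_eq:
  fixes a b :: "'a::linorder"
  assumes "insert a A = insert b B" "\<forall>y\<in>A. a < y" "\<forall>y\<in>B. b < y"
  shows "a = b \<and> A = B"
proof -
  have ab: "a = b"
  proof (rule ccontr)
    assume "a \<noteq> b"
    then have "a \<in> B" "b \<in> A" using assms(1) by (metis insertCI insertE)+
    then show False using assms(2,3) by force
  qed
  have "a \<notin> A" "b \<notin> B" using assms(2,3) by auto
  then show ?thesis using ab assms(1) by (metis Diff_insert_absorb)
qed

lemma renaming_Var: "renaming Var"
  unfolding renaming_fperm by (rule exI[of _ id]) simp

lemma det_same:
  fixes s t :: "('p,'f) step"
  assumes S: "scheduling_rule S" "s \<in> S" "t \<in> S" and eq: "src t = src s" "cls t = cls s"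
  shows "\<exists>g \<rho>. fperm g \<and> shifting \<rho> \<and> res t = pshift \<rho> (psubst (Var \<circ> g) (res s))"
proof -
  have sts: "is_step s" "is_step t" using S by (auto simp: scheduling_rule_def)
  note sD = is_stepD[OF sts(1)] and tD = is_stepD[OF sts(2)]
  define G where "G = src s"
  define x0 where "x0 = sel G"
  have x0: "least_patom G x0" using sel_least[OF sts(1)] G_def x0_def by simp
  define K where "K = G - {x0}"
  have x0G: "x0 \<in> G" and x0K: "\<forall>y\<in>K. snd x0 < snd y"
    using x0 K_def by (auto simp: least_patom_def)
  have GK: "G = insert x0 K" using x0G K_def by auto
  have selt: "sel (src t) = x0" using eq G_def x0_def by simp
  have ld1: "lower_data t s x0 K Var id {}"
    unfolding lower_data_def using sts renaming_Var eq GK x0K G_def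
    by (auto simp: prios_def)
  have ld2: "lower_data s t x0 K Var id {}"
    unfolding lower_data_def using sts renaming_Var eq GK x0K G_def
    by (auto simp: prios_def)
  have "lowering t s" "lowering s t" using ld1 ld2 unfolding lowering_def by blast+
  then have "cong_lowering t s"
    using S unfolding scheduling_rule_def deterministic_def by blast
  then obtain a2 K2 l2 \<sigma>2 X2 \<rho> where ld: "lower_data t s a2 K2 l2 \<sigma>2 X2" and sr: "shifting \<rho>"
    and pK: "pshift \<rho> K2 = pshift \<sigma>2 K2"
    and pB: "pshift \<rho> (pshift (shf s) (snd (cls s))) = pshift (shf t) (snd (cls s))"
    unfolding cong_lowering_def by blast
  have s2: "shifting \<sigma>2" using ld lower_data_def by blast
  have bs2: "bij \<sigma>2" "strict_mono \<sigma>2" using s2 shifting_def by auto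
  have a2: "G = insert a2 K2" "\<forall>y\<in>K2. snd a2 < snd y"
    using ld G_def by (auto simp: lower_data_def)
  have "least_patom G a2" using a2 by (auto simp: least_patom_def)
  then have a2x: "a2 = x0" using x0 least_unique by blast
  have K2K: "K2 = K" using a2 a2x K_def by auto
  have t2: "G = insert (pat_map l2 \<sigma>2 x0) (pshift \<sigma>2 (psubst l2 K) \<union> X2)"
    "\<forall>y\<in>pshift \<sigma>2 (psubst l2 K) \<union> X2. snd (pat_map l2 \<sigma>2 x0) < snd y"
    using ld G_def eq a2x K2K by (auto simp: lower_data_def)
  define P where "P = prios K"
  have fG: "finite G" using sD(1) G_def is_pgoal_def by blast
  have fP: "finite P" unfolding P_def K_def using fG by (intro finite_prios) simp
  have pr1: "prios G = insert (snd x0) P" using GK P_def by (simp add: prios_def)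
  have pr2: "prios G = insert (\<sigma>2 (snd x0)) (\<sigma>2 ` P \<union> prios X2)"
  proof -
    have "prios G = insert (\<sigma>2 (snd x0)) (prios (pshift \<sigma>2 (psubst l2 K)) \<union> prios X2)"
      using t2(1) by (simp add: prios_def pat_map_def image_Un)
    then show ?thesis using P_def by (simp add: prios_pshift)
  qed
  have m1: "\<forall>y\<in>P. snd x0 < y" using x0K P_def by (auto simp: prios_def)
  have m2: "\<forall>y\<in>\<sigma>2 ` P \<union> prios X2. \<sigma>2 (snd x0) < y"
  proof -
    have "\<forall>y\<in>\<sigma>2 ` P. \<sigma>2 (snd x0) < y" using m1 bs2(2) by (auto simp: strict_mono_less)
    moreover have "\<forall>y\<in>prios X2. \<sigma>2 (snd x0) < y" using t2(2) by (auto simp: prios_def pat_map_def)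
    ultimately show ?thesis by blast
  qed
  have "P = \<sigma>2 ` P \<union> prios X2" using min_eq[OF _ m1 m2] pr1 pr2 by metis
  then have sub: "\<sigma>2 ` P \<subseteq> P" by blast
  have "card (\<sigma>2 ` P) = card P" using bs2(1) card_image bij_is_inj inj_on_subset subset_UNIV by metis
  then have s2P: "\<sigma>2 ` P = P" using card_subset_eq fP sub by blast
  have "\<rho> ` P = P" using pK K2K s2P P_def prios_pshift by metis
  then have rfix: "\<forall>p\<in>P. \<rho> p = p" using strict_mono_fix sr fP shifting_def by blast
  have rK: "pshift \<rho> K = K"
    using pshift_cong[of K \<rho> id] rfix P_def by simp
  obtain xs where xs: "fperm xs" "ren s = Var \<circ> xs" using sD(3) renaming_fperm by blast
  obtain xt where xt: "fperm xt" "ren t = Var \<circ> xt" using tD(3) renaming_fperm by blast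
  have bxs: "bij xs" "bij xt" using xs xt fperm_def by auto
  define c where "c = cls s"
  define C where "C = cvars (rcl s)"
  have rcs: "rcl s = csubst (Var \<circ> xs) c" by (simp add: rcl_def c_def xs)
  have rct: "rcl t = csubst (Var \<circ> xt) c" by (simp add: rcl_def c_def xt eq)
  have Cc: "C = xs ` cvars c" using C_def rcs cvars_csubst_ren by metis
  have Ct: "cvars (rcl t) = xt ` cvars c" using rct cvars_csubst_ren by metis
  have djs: "pvars G \<inter> C = {}" using sD(6) G_def C_def by simp
  have djt: "pvars G \<inter> xt ` cvars c = {}" using tD(6) eq G_def Ct by simp
  define fd where "fd = (\<lambda>x. if x \<in> pvars G then x else xt (inv xs x))"
  have "inj_on fd (pvars G \<union> C)"
    unfolding inj_on_Un
  proof (intro conjI)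
    show "inj_on fd (pvars G)" unfolding fd_def inj_on_def by auto
    show "inj_on fd C" using djs bxs unfolding fd_def inj_on_def
      by (auto simp: bij_def inj_eq) (metis bij_f_inv bxs(1))
    have "fd ` (pvars G - C) \<subseteq> pvars G" using fd_def by auto
    moreover have "fd ` (C - pvars G) \<subseteq> xt ` cvars c" using fd_def Cc bxs by auto
    ultimately show "fd ` (pvars G - C) \<inter> fd ` (C - pvars G) = {}" using djt by blast
  qed
  moreover have "finite (pvars G \<union> C)"
    using finite_pvars[OF fG] finite_cvars[OF sD(2)] Cc c_def by simp
  ultimately obtain \<mu> where mu: "fperm \<mu>" "\<forall>x\<in>pvars G \<union> C. \<mu> x = fd x"
    using extend_perm by blast
  have bmu: "bij \<mu>" using mu fperm_def by blast
  have muG: "\<forall>x\<in>pvars G. \<mu> x = x" using mu(2) fd_def by auto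
  have muC: "\<forall>x\<in>cvars c. \<mu> (xs x) = xt x"
    using mu(2) fd_def Cc djs bxs by auto
  have crcl: "csubst (Var \<circ> \<mu>) (rcl s) = rcl t"
    unfolding rcs rct csubst_comp by (rule csubst_cong) (use muC in auto)
  have pvK: "pvars K \<subseteq> pvars G" using K_def by (auto simp: pvars_def)
  have muK: "psubst (Var \<circ> \<mu>) K = K"
    using psubst_cong[of K "Var \<circ> \<mu>" Var] muG pvK by auto
  have avx0: "avars (fst x0) \<subseteq> pvars G" using x0G by (auto simp: pvars_def)
  have mux0: "asubst (Var \<circ> \<mu>) (fst x0) = fst x0"
    using asubst_cong[of "fst x0" "Var \<circ> \<mu>" Var] muG avx0 by auto
  define hs where "hs = fst (rcl s)"
  have ht: "fst (rcl t) = asubst (Var \<circ> \<mu>) hs" using crcl hs_def by (metis csubst_def fst_conv)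
  define \<theta>s where "\<theta>s = umgu s"
  define \<theta>t where "\<theta>t = umgu t"
  have mgs: "idem_rel_mgu \<theta>s (fst x0) hs" using sD(7) \<theta>s_def hs_def G_def x0_def by simp
  have "idem_rel_mgu \<theta>t (asubst (Var \<circ> \<mu>) (fst x0)) (asubst (Var \<circ> \<mu>) hs)"
    using tD(7) selt ht mux0 \<theta>t_def by simp
  then have mgst: "idem_rel_mgu (\<lambda>x. tsubst (Var \<circ> inv \<mu>) (\<theta>t (\<mu> x))) (fst x0) hs"
    using mgu_transport bmu by blast
  define \<theta>x where "\<theta>x = (\<lambda>x. tsubst (Var \<circ> inv \<mu>) (\<theta>t (\<mu> x)))"
  have "\<exists>\<delta>. \<theta>x = scomp \<theta>s \<delta>" using mgs mgst \<theta>x_def by (auto simp: idem_rel_mgu_def)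
  then obtain \<delta> where d1: "\<theta>x = scomp \<theta>s \<delta>" by blast
  have "\<exists>\<delta>. \<theta>s = scomp \<theta>x \<delta>" using mgs mgst \<theta>x_def by (auto simp: idem_rel_mgu_def)
  then obtain \<delta>' where d2: "\<theta>s = scomp \<theta>x \<delta>'" by blast
  define Bs where "Bs = snd (rcl s)"
  define U where "U = K \<union> pshift (shf t) Bs"
  have fBs: "finite Bs"
    using sD(2) Bs_def rcs c_def by (simp add: csubst_def psubst_def is_clause_def is_pgoal_def)
  have fU: "finite (pvars U)"
    unfolding U_def using fG fBs K_def by (intro finite_pvars) (simp add: pshift_def)
  obtain g where g: "fperm g" "\<forall>x\<in>pvars U. \<theta>x x = tsubst (Var \<circ> g) (\<theta>s x)"
    using mutual_inst[OF d1 d2 fU] by blast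
  have ress: "res s = psubst \<theta>s (K \<union> pshift (shf s) Bs)"
    by (simp add: res_def \<theta>s_def K_def G_def x0_def Bs_def)
  have Bs2: "pshift \<rho> (pshift (shf s) Bs) = pshift (shf t) Bs"
  proof -
    have "pshift \<rho> (pshift (shf s) Bs) = psubst (ren s) (pshift \<rho> (pshift (shf s) (snd (cls s))))"
      by (simp add: Bs_def rcl_def csubst_def psubst_pshift)
    also have "\<dots> = pshift (shf t) Bs" using pB by (simp add: Bs_def rcl_def csubst_def psubst_pshift)
    finally show ?thesis .
  qed
  have rs: "pshift \<rho> (res s) = psubst \<theta>s U"
    using ress rK Bs2 by (simp add: psubst_pshift[symmetric] pshift_Un U_def)
  have Bt: "snd (rcl t) = psubst (Var \<circ> \<mu>) Bs" using crcl Bs_def by (metis csubst_def snd_conv)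
  have rest: "res t = psubst \<theta>t (psubst (Var \<circ> \<mu>) U)"
    using muK Bt selt eq
    by (simp add: res_def \<theta>t_def U_def psubst_Un psubst_pshift K_def G_def)
  also have "\<dots> = psubst (Var \<circ> \<mu>) (psubst \<theta>x U)"
    using bmu by (simp add: psubst_comp \<theta>x_def)
  also have "psubst \<theta>x U = psubst (\<lambda>x. tsubst (Var \<circ> g) (\<theta>s x)) U"
    by (rule psubst_cong) (use g in auto)
  also have "\<dots> = psubst (Var \<circ> g) (psubst \<theta>s U)" by (simp add: psubst_comp)
  finally have "res t = psubst (Var \<circ> \<mu>) (psubst (Var \<circ> g) (pshift \<rho> (res s)))" using rs by (simp add: comp_def)
  also have "\<dots> = pshift \<rho> (psubst (Var \<circ> (\<mu> \<circ> g)) (res s))"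
    by (simp add: psubst_comp psubst_pshift o_def)
  finally show ?thesis using fperm_comp mu(1) g(1) sr by blast
qed


lemma in_S_transport:
  assumes "scheduling_rule S" "s' \<in> S" "cong_lowering s' t" "cong_lowering t s'"
  shows "t \<in> S"
  using assms unfolding scheduling_rule_def complete_def by blast

lemma part_a:
  assumes S: "scheduling_rule S"
  shows "chain G ds \<Longrightarrow> set ds \<subseteq> S \<Longrightarrow> chain G' ds' \<Longrightarrow> set ds' \<subseteq> S
    \<Longrightarrow> map cls ds = map cls ds' \<Longrightarrow> G' = pshift \<sigma> (psubst (Var \<circ> l) G) \<Longrightarrow> fperm l
    \<Longrightarrow> shifting \<sigma> \<Longrightarrow> p_variant (final G' ds') (final G ds)"
proof (induction ds arbitrary: G G' ds' l \<sigma>)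
  case Nil
  then have "ds' = []" by simp
  then have "final G' ds' = pshift \<sigma> (psubst (Var \<circ> l) G)" using Nil.prems(6) by (simp only: final.simps)
  moreover have "final G [] = G" by simp
  ultimately show ?case unfolding p_variant_def renaming_fperm using Nil.prems(7,8) by metis
next
  case (Cons s ss)
  from Cons.prems(5) obtain s' ss' where ds': "ds' = s' # ss'" "cls s = cls s'" "map cls ss = map cls ss'"
    by (cases ds') auto
  have st: "is_step s" "src s = G" "chain (res s) ss" "s \<in> S" "set ss \<subseteq> S"
    using Cons.prems(1,2) by auto
  have st': "is_step s'" "src s' = G'" "chain (res s') ss'" "s' \<in> S" "set ss' \<subseteq> S"
    using Cons.prems(3,4) ds'(1) by auto
  obtain t m where t: "is_step t" "src t = G" "cls t = cls s'" "fperm m"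
      "res s' = pshift \<sigma> (psubst (Var \<circ> m) (res t))" "cong_lowering s' t" "cong_lowering t s'"
  proof -
    have "src s' = pshift \<sigma> (psubst (Var \<circ> l) G)" using st'(2) Cons.prems(6) by (simp only:)
    from transport[OF st'(1) this Cons.prems(7,8), of "{}"] that show ?thesis by blast
  qed
  have tS: "t \<in> S" using in_S_transport[OF S st'(4) t(6,7)] .
  obtain g \<rho> where g: "fperm g" "shifting \<rho>" "res t = pshift \<rho> (psubst (Var \<circ> g) (res s))"
    using det_same[OF S st(4) tS] t(2,3) st(2) ds'(2) by metis
  have "res s' = pshift (\<sigma> \<circ> \<rho>) (psubst (Var \<circ> (m \<circ> g)) (res s))"
    using t(5) g(3) pv_comp by metis
  moreover have "fperm (m \<circ> g)" using fperm_comp t(4) g(1) by blast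
  moreover have "shifting (\<sigma> \<circ> \<rho>)" using shifting_comp Cons.prems(8) g(2) by blast
  ultimately have "p_variant (final (res s') ss') (final (res s) ss)"
    using Cons.IH[OF st(3,5) st'(3,5) ds'(3)] by blast
  then show ?case using ds'(1) by simp
qed

fun fresh :: "nat set \<Rightarrow> ('p,'f) step list \<Rightarrow> bool" where
  "fresh F [] = True"
| "fresh F (t # ts) = (cvars (rcl t) \<inter> F = {} \<and> fresh (F \<union> cvars (rcl t)) ts)"

lemma finite_cvars_rcl: "is_step s \<Longrightarrow> finite (cvars (rcl s))"
proof -
  assume st: "is_step s"
  obtain f where "ren s = Var \<circ> f" using is_stepD(3)[OF st] renaming_fperm by blast
  then have "cvars (rcl s) = f ` cvars (cls s)" by (simp add: rcl_def cvars_csubst_ren)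
  then show ?thesis using finite_cvars[OF is_stepD(2)[OF st]] by simp
qed

lemma part_b:
  assumes S: "scheduling_rule S"
  shows "chain G' ds' \<Longrightarrow> set ds' \<subseteq> S \<Longrightarrow> G' = pshift \<sigma> (psubst (Var \<circ> l) G) \<Longrightarrow> fperm l
    \<Longrightarrow> shifting \<sigma> \<Longrightarrow> finite F
    \<Longrightarrow> \<exists>Dr. chain G Dr \<and> set Dr \<subseteq> S \<and> map cls Dr = map cls ds' \<and> fresh F Dr"
proof (induction ds' arbitrary: G G' l \<sigma> F)
  case Nil
  then show ?case by (intro exI[of _ "[]"]) simp
next
  case (Cons s' ss')
  have st': "is_step s'" "src s' = G'" "chain (res s') ss'" "s' \<in> S" "set ss' \<subseteq> S"
    using Cons.prems(1,2) by auto
  obtain t m where t: "is_step t" "src t = G" "cls t = cls s'" "cvars (rcl t) \<inter> F = {}" "fperm m"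
      "res s' = pshift \<sigma> (psubst (Var \<circ> m) (res t))" "cong_lowering s' t" "cong_lowering t s'"
  proof -
    have "src s' = pshift \<sigma> (psubst (Var \<circ> l) G)" using st'(2) Cons.prems(3) by (simp only:)
    from transport[OF st'(1) this Cons.prems(4,5,6)] that show ?thesis by blast
  qed
  have tS: "t \<in> S" using in_S_transport[OF S st'(4) t(7,8)] .
  have fF: "finite (F \<union> cvars (rcl t))" using Cons.prems(6) finite_cvars_rcl[OF t(1)] by simp
  obtain Dr where Dr: "chain (res t) Dr" "set Dr \<subseteq> S" "map cls Dr = map cls ss'"
      "fresh (F \<union> cvars (rcl t)) Dr"
    using Cons.IH[OF st'(3,5) t(6) t(5) Cons.prems(5) fF] by blast
  show ?case
    by (rule exI[of _ "t # Dr"]) (use t tS Dr in auto)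
qed

lemma fresh_nvar: "fresh F ds \<Longrightarrow> nvar ds \<inter> F = {}"
proof (induction ds arbitrary: F)
  case Nil then show ?case by (simp add: nvar_def)
next
  case (Cons t ts)
  then have "nvar ts \<inter> (F \<union> cvars (rcl t)) = {}" by simp
  then show ?case using Cons.prems by (auto simp: nvar_def)
qed

lemma UN_Suc_Cons: "(\<Union>i<Suc j. f ((t # ts) ! i)) = f t \<union> (\<Union>i<j. f (ts ! i))"
  by (auto simp: less_Suc_eq_0_disj)

lemma fresh_idx: "fresh F ds \<Longrightarrow> j < length ds \<Longrightarrow>
    cvars (rcl (ds ! j)) \<inter> (F \<union> (\<Union>i<j. cvars (rcl (ds ! i)))) = {}"
proof (induction ds arbitrary: F j)
  case Nil then show ?case by simp
next
  case (Cons t ts)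
  show ?case
  proof (cases j)
    case 0 then show ?thesis using Cons.prems by simp
  next
    case (Suc j')
    have "cvars (rcl (ts ! j')) \<inter> ((F \<union> cvars (rcl t)) \<union> (\<Union>i<j'. cvars (rcl (ts ! i)))) = {}"
      using Cons.IH[of "F \<union> cvars (rcl t)" j'] Cons.prems Suc by simp
    moreover have "(\<Union>i<Suc j'. cvars (rcl ((t # ts) ! i))) = cvars (rcl t) \<union> (\<Union>i<j'. cvars (rcl (ts ! i)))"
      by (rule UN_Suc_Cons)
    ultimately show ?thesis using Suc by auto
  qed
qed

theorem lemmaL3p2p2:
  fixes S :: "('p,'f) step set" and V :: "nat set" and G G' :: "('p,'f) pgoal"
  assumes "scheduling_rule S" and "finite V" and "is_pgoal G" and "p_variant G' G"
  shows "(\<forall>D Q R. deriv_via S G D Q \<and> deriv_via S G' D R \<longrightarrow> p_variant R Q)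
       \<and> (\<forall>D. (\<exists>R. deriv_via S G' D R) \<longrightarrow>
            (\<exists>Dr. psld G Dr \<and> set Dr \<subseteq> S \<and> template Dr = D \<and> nvar Dr \<inter> V = {}))"
proof -
  obtain l \<sigma> where v: "fperm l" "shifting \<sigma>" "G' = pshift \<sigma> (psubst (Var \<circ> l) G)"
    using assms(4) unfolding p_variant_def renaming_fperm by blast
  have A: "p_variant R Q" if d1: "deriv_via S G D Q" and d2: "deriv_via S G' D R" for D Q R
  proof -
    obtain ds where ds: "chain G ds" "set ds \<subseteq> S" "map cls ds = D" "final G ds = Q"
      using d1 by (auto simp: deriv_via_def psld_def template_def)
    obtain ds' where ds': "chain G' ds'" "set ds' \<subseteq> S" "map cls ds' = D" "final G' ds' = R"
      using d2 by (auto simp: deriv_via_def psld_def template_def)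
    show ?thesis using part_a[OF assms(1) ds(1,2) ds'(1,2) _ v(3,1,2)] ds ds' by simp
  qed
  have B: "\<exists>Dr. psld G Dr \<and> set Dr \<subseteq> S \<and> template Dr = D \<and> nvar Dr \<inter> V = {}"
    if d3: "deriv_via S G' D R" for D R
  proof -
    obtain ds' where ds': "chain G' ds'" "set ds' \<subseteq> S" "map cls ds' = D"
      using d3 by (auto simp: deriv_via_def psld_def template_def)
    have fF: "finite (V \<union> pvars G)"
      using assms(2,3) finite_pvars is_pgoal_def by blast
    obtain Dr where Dr: "chain G Dr" "set Dr \<subseteq> S" "map cls Dr = map cls ds'" "fresh (V \<union> pvars G) Dr"
      using part_b[OF assms(1) ds'(1,2) v(3,1,2) fF] by blast
    have "psld G Dr"
      unfolding psld_def
    proof (intro conjI allI impI)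
      fix j assume "j < length Dr"
      then have "cvars (rcl (Dr ! j)) \<inter> ((V \<union> pvars G) \<union> (\<Union>i<j. cvars (rcl (Dr ! i)))) = {}"
        using fresh_idx Dr(4) by blast
      then show "cvars (rcl (Dr ! j)) \<inter> (pvars G \<union> (\<Union>i<j. cvars (rcl (Dr ! i)))) = {}" by blast
    qed (rule Dr(1))
    moreover have "nvar Dr \<inter> V = {}" using fresh_nvar[OF Dr(4)] by blast
    ultimately show ?thesis using Dr ds'(3) by (auto simp: template_def)
  qed
  show ?thesis using A B by blast
qed

end
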